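(* The special monoid $\Pi_2=\langle a,b,c\mid (ab^ic)^2=1\ (i\geq 1)\rangle$ has context-free word problem, and none of its maximal subgroups is finitely generated.
   Context: For a monoid $M$ with finite generating set $A$, the word problem of $M$ with respect to $A$ is the language $\{u\#v^{\mathrm{rev}} \mid u,v\in A^\ast,\ u=_M v\}$, where $\#\notin A$ and $v^{\mathrm{rev}}$ is the reversal of $v$; $M$ has context-free word problem if this language is context-free. For an idempotent $e$ of $M$, the maximal subgroup of $M$ containing $e$ is the group of units of $eMe$. *)

theory Defs
  imports "HOL-Algebra.Generated_Groups"
begin

text \<open>A context-free grammar is given by a set of productions (A, w) with A a
nonterminal (of type nat) and w a word over nonterminals (Inl) and terminals (Inr).\<close>

inductive cfg_step :: "(nat \<times> (nat + 't) list) set \<Rightarrow> (nat + 't) list \<Rightarrow> (nat + 't) list \<Rightarrow> bool"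
  for P where
  "(A, w) \<in> P \<Longrightarrow> cfg_step P (u @ [Inl A] @ v) (u @ w @ v)"

definition cfg_lang :: "(nat \<times> (nat + 't) list) set \<Rightarrow> nat \<Rightarrow> 't list set" where
  "cfg_lang P S = {w. (cfg_step P)\<^sup>*\<^sup>* [Inl S] (map Inr w)}"

definition context_free :: "'t list set \<Rightarrow> bool" where
  "context_free L \<longleftrightarrow> (\<exists>P S. finite P \<and> L = cfg_lang P S)"

inductive pres_eq :: "('g list \<times> 'g list) set \<Rightarrow> 'g list \<Rightarrow> 'g list \<Rightarrow> bool"
  for R where
  refl: "pres_eq R u u"
| sym: "pres_eq R u v \<Longrightarrow> pres_eq R v u"
| trans: "pres_eq R u v \<Longrightarrow> pres_eq R v w \<Longrightarrow> pres_eq R u w"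
| rel: "(l, r) \<in> R \<Longrightarrow> pres_eq R (x @ l @ y) (x @ r @ y)"

definition pres_class :: "('g list \<times> 'g list) set \<Rightarrow> 'g list \<Rightarrow> 'g list set" where
  "pres_class R u = {v. pres_eq R u v}"

definition pres_monoid :: "('g list \<times> 'g list) set \<Rightarrow> 'g list set monoid" where
  "pres_monoid R = \<lparr> carrier = range (pres_class R),
     mult = (\<lambda>X Y. {w. \<exists>x\<in>X. \<exists>y\<in>Y. pres_eq R (x @ y) w}),
     one = pres_class R [] \<rparr>"

datatype 'g wp_sym = Letter 'g | Hash

definition word_problem :: "('g list \<times> 'g list) set \<Rightarrow> 'g wp_sym list set" where
  "word_problem R = {map Letter u @ [Hash] @ map Letter (rev v) | u v. pres_eq R u v}"

definition local_monoid :: "('a, 'b) monoid_scheme \<Rightarrow> 'a \<Rightarrow> 'a monoid" where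
  "local_monoid M e = \<lparr> carrier = {e \<otimes>\<^bsub>M\<^esub> x \<otimes>\<^bsub>M\<^esub> e | x. x \<in> carrier M},
     mult = mult M, one = e \<rparr>"

definition idempotent_of :: "('a, 'b) monoid_scheme \<Rightarrow> 'a \<Rightarrow> bool" where
  "idempotent_of M e \<longleftrightarrow> e \<in> carrier M \<and> e \<otimes>\<^bsub>M\<^esub> e = e"

text \<open>Maximal subgroup containing e: the group of units of eMe.\<close>

definition maximal_subgroup :: "('a, 'b) monoid_scheme \<Rightarrow> 'a \<Rightarrow> 'a monoid" where
  "maximal_subgroup M e = units_of (local_monoid M e)"

definition finitely_generated_group :: "('a, 'b) monoid_scheme \<Rightarrow> bool" where
  "finitely_generated_group G \<longleftrightarrow>
     (\<exists>S. finite S \<and> S \<subseteq> carrier G \<and> generate G S = carrier G)"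

datatype gen = a | b | c

definition Pi2_rels :: "(gen list \<times> gen list) set" where
  "Pi2_rels = {((a # replicate i b @ [c]) @ (a # replicate i b @ [c]), []) | i. i \<ge> 1}"

definition Pi2 :: "gen list set monoid" where
  "Pi2 = pres_monoid Pi2_rels"

end

theory Submission
  imports Defs
begin


definition h :: "nat \<Rightarrow> gen list" where "h i = a # replicate i b @ [c]"
definition rel :: "nat \<Rightarrow> gen list" where "rel i = h i @ h i"

lemma Pi2_rels_alt: "Pi2_rels = {(rel i, []) | i. i \<ge> 1}"
  unfolding Pi2_rels_def rel_def h_def by simp

lemma rep_b_c_eq: "replicate i b @ a # X = replicate j b @ a # Y \<Longrightarrow> i = j \<and> X = Y"
proof (induction i arbitrary: j)
  case 0 then show ?case by (cases j) auto
next
  case (Suc i) then show ?case by (cases j) auto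
qed

lemma h_suffix_uniq: "x @ h i = y @ h j \<Longrightarrow> i = j \<and> x = y"
proof -
  assume H: "x @ h i = y @ h j"
  hence "rev (x @ h i) = rev (y @ h j)" by simp
  hence "replicate i b @ a # rev x = replicate j b @ a # rev y" by (simp add: h_def)
  from rep_b_c_eq[OF this] show ?thesis by simp
qed

lemma rel_suffix_uniq: "p @ rel i = q @ rel j \<Longrightarrow> i = j \<and> p = q"
proof -
  assume "p @ rel i = q @ rel j"
  hence "(p @ h i) @ h i = (q @ h j) @ h j" by (simp add: rel_def)
  from h_suffix_uniq[OF this] have "i = j" "p @ h i = q @ h j" by auto
  with h_suffix_uniq[OF this(2)] show ?thesis by simp
qed

definition red1 :: "gen list \<Rightarrow> gen list" where
  "red1 l = (if \<exists>p i. i \<ge> 1 \<and> l = p @ rel i then (THE p. \<exists>i. i \<ge> 1 \<and> l = p @ rel i) else l)"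

lemma red1_rel: "i \<ge> 1 \<Longrightarrow> red1 (p @ rel i) = p"
  unfolding red1_def
  apply (subst if_P, blast)
  apply (rule the_equality)
   apply blast
  using rel_suffix_uniq by blast

lemma red1_norel: assumes "\<not> (\<exists>p i. i \<ge> 1 \<and> l = p @ rel i)" shows "red1 l = l"
  unfolding red1_def using assms by (rule if_not_P)

lemma last_rel: "last (rel i) = c" by (simp add: rel_def h_def)

lemma rel_ne: "rel i \<noteq> []" by (simp add: rel_def h_def)

lemma red1_snoc_notc: "x \<noteq> c \<Longrightarrow> red1 (l @ [x]) = l @ [x]"
proof (rule red1_norel, clarify)
  fix p i assume "x \<noteq> c" "l @ [x] = p @ rel i"
  hence "last (l @ [x]) = last (p @ rel i)" by simp
  with \<open>x \<noteq> c\<close> show False using last_rel rel_ne by simp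
qed

definition step :: "gen list \<Rightarrow> gen \<Rightarrow> gen list" where "step l x = red1 (l @ [x])"
definition nf :: "gen list \<Rightarrow> gen list" where "nf w = foldl step [] w"

lemma nf_append: "nf (u @ v) = foldl step (nf u) v" by (simp add: nf_def)
lemma nf_snoc: "nf (u @ [x]) = step (nf u) x" by (simp add: nf_def)

definition irr :: "gen list \<Rightarrow> bool" where
  "irr s \<longleftrightarrow> \<not> (\<exists>p q i. i \<ge> 1 \<and> s = p @ rel i @ q)"

lemma irr_prefix: "irr (s @ t) \<Longrightarrow> irr s"
  unfolding irr_def by (metis append.assoc)
lemma irr_suffix: "irr (s @ t) \<Longrightarrow> irr t"
  unfolding irr_def by (metis append.assoc)

lemma irr_snoc_nosuffix: "irr s \<Longrightarrow> \<not> (\<exists>p i. i \<ge> 1 \<and> s @ [x] = p @ rel i) \<Longrightarrow> irr (s @ [x])"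
proof (unfold irr_def, clarify)
  fix p q i assume irr: "\<not> (\<exists>p q i. 1 \<le> i \<and> s = p @ rel i @ q)"
    and ns: "\<not> (\<exists>p i. i \<ge> 1 \<and> s @ [x] = p @ rel i)" and i: "1 \<le> i" and eq: "s @ [x] = p @ rel i @ q"
  show False
  proof (cases q rule: rev_cases)
    case Nil then show ?thesis using ns i eq by auto
  next
    case (snoc q' y) then have "s = p @ rel i @ q'" using eq by simp
    then show ?thesis using irr i by blast
  qed
qed

lemma irr_step: "irr s \<Longrightarrow> irr (step s x)"
  unfolding step_def
proof -
  assume "irr s"
  show "irr (red1 (s @ [x]))"
  proof (cases "\<exists>p i. i \<ge> 1 \<and> s @ [x] = p @ rel i")
    case True
    then obtain p i where "i \<ge> 1" "s @ [x] = p @ rel i" by blast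
    moreover then obtain r' where "rel i = r' @ [x]" by (metis rel_ne append_butlast_last_id butlast_append last_appendR last_snoc)
    ultimately have "s = p @ r'" by simp
    have "red1 (s @ [x]) = p" using \<open>s @ [x] = p @ rel i\<close> red1_rel \<open>i \<ge> 1\<close> by simp
    then show ?thesis using \<open>irr s\<close> irr_prefix \<open>s = p @ r'\<close> by simp
  next
    case False then show ?thesis using red1_norel irr_snoc_nosuffix \<open>irr s\<close> by simp
  qed
qed

lemma irr_foldl: "irr s \<Longrightarrow> irr (foldl step s w)"
  by (induction w arbitrary: s) (auto simp: irr_step)

lemma irr_nil: "irr []" unfolding irr_def using rel_ne by simp

lemma irr_nf: "irr (nf w)" unfolding nf_def using irr_foldl irr_nil by simp

lemma nf_irr: "irr s \<Longrightarrow> nf s = s"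
proof (induction s rule: rev_induct)
  case Nil then show ?case by (simp add: nf_def)
next
  case (snoc x s)
  have "irr s" using snoc.prems irr_prefix by blast
  have ns: "\<not> (\<exists>p i. i \<ge> 1 \<and> s @ [x] = p @ rel i)"
    using snoc.prems unfolding irr_def by (metis append_Nil2)
  show ?case using snoc.IH[OF \<open>irr s\<close>] red1_norel[OF ns] by (simp add: nf_snoc step_def)
qed

lemma foldl_step_nocs: "\<forall>x\<in>set w. x \<noteq> c \<Longrightarrow> foldl step l w = l @ w"
  by (induction w arbitrary: l) (auto simp: step_def red1_snoc_notc)

lemma foldl_h: "foldl step l (h i) = red1 (l @ h i)"
proof -
  have hh: "h i = (a # replicate i b) @ [c]" by (simp add: h_def)
  have "foldl step l (h i) = step (foldl step l (a # replicate i b)) c"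
    unfolding hh by (simp only: foldl_append foldl_Cons foldl_Nil)
  also have "foldl step l (a # replicate i b) = l @ a # replicate i b"
    by (rule foldl_step_nocs) auto
  also have "step (l @ a # replicate i b) c = red1 (l @ h i)" by (simp add: step_def h_def)
  finally show ?thesis .
qed

lemma foldl_rel: "irr s \<Longrightarrow> i \<ge> 1 \<Longrightarrow> foldl step s (rel i) = s"
proof -
  assume irr: "irr s" and i: "i \<ge> 1"
  have eq: "foldl step s (rel i) = foldl step (red1 (s @ h i)) (h i)" by (simp add: rel_def foldl_h)
  show ?thesis
  proof (cases "\<exists>p j. j \<ge> 1 \<and> s @ h i = p @ rel j")
    case True
    then obtain p j where j: "j \<ge> 1" "s @ h i = p @ rel j" by blast
    then have "s @ h i = (p @ h j) @ h j" by (simp add: rel_def)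
    from h_suffix_uniq[OF this] have s: "s = p @ h i" by auto
    have "red1 (s @ h i) = p" using j red1_rel by simp
    then have "foldl step s (rel i) = red1 s" using eq s by (simp add: foldl_h)
    also have "red1 s = s" using irr unfolding irr_def by (intro red1_norel) (metis append_Nil2)
    finally show ?thesis .
  next
    case False
    then have "red1 (s @ h i) = s @ h i" by (rule red1_norel)
    then have "foldl step s (rel i) = red1 (s @ rel i)" using eq by (simp add: foldl_h rel_def)
    then show ?thesis using red1_rel i by simp
  qed
qed

lemma pres_eq_cong: "pres_eq R u v \<Longrightarrow> pres_eq R (p @ u @ q) (p @ v @ q)"
proof (induction rule: pres_eq.induct)
  case (refl u) then show ?case by (rule pres_eq.refl)
next
  case (sym u v) show ?case by (rule pres_eq.sym) (rule sym.IH)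
next
  case (trans u v w) show ?case by (rule pres_eq.trans[OF trans.IH(1) trans.IH(2)])
next
  case (rel l r x y)
  have "pres_eq R ((p @ x) @ l @ (y @ q)) ((p @ x) @ r @ (y @ q))" by (rule pres_eq.rel[OF rel])
  then show ?case by simp
qed

lemma pres_eq_app: "pres_eq R u u' \<Longrightarrow> pres_eq R v v' \<Longrightarrow> pres_eq R (u @ v) (u' @ v')"
proof -
  assume "pres_eq R u u'" "pres_eq R v v'"
  from pres_eq_cong[OF this(1), of "[]" v] pres_eq_cong[OF this(2), of u' "[]"]
  show ?thesis by (simp add: pres_eq.trans)
qed

abbreviation peq where "peq \<equiv> pres_eq Pi2_rels"

lemma peq_rel: "i \<ge> 1 \<Longrightarrow> peq (p @ rel i @ q) (p @ q)"
  using pres_eq.rel[of "rel i" "[]" Pi2_rels p q] unfolding Pi2_rels_alt by auto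

lemma peq_red1: "peq l (red1 l)"
proof (cases "\<exists>p i. i \<ge> 1 \<and> l = p @ rel i")
  case True
  then obtain p i where "i \<ge> 1" "l = p @ rel i" by blast
  then show ?thesis using peq_rel[of i p "[]"] red1_rel by simp
next
  case False then show ?thesis using red1_norel pres_eq.refl by simp
qed

lemma peq_nf: "peq u (nf u)"
proof (induction u rule: rev_induct)
  case Nil then show ?case by (simp add: nf_def pres_eq.refl)
next
  case (snoc x u)
  have "peq (u @ [x]) (nf u @ [x])" using pres_eq_app[OF snoc.IH pres_eq.refl] .
  moreover have "peq (nf u @ [x]) (nf (u @ [x]))" using peq_red1 by (simp add: nf_snoc step_def)
  ultimately show ?case by (rule pres_eq.trans)
qed

lemma nf_rel: "i \<ge> 1 \<Longrightarrow> nf (p @ rel i @ q) = nf (p @ q)"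
proof -
  assume i: "i \<ge> 1"
  have "nf (p @ rel i @ q) = foldl step (nf (p @ rel i)) q" using nf_append[of "p @ rel i" q] by simp
  also have "nf (p @ rel i) = nf p" using nf_append[of p "rel i"] foldl_rel[OF irr_nf i] by simp
  finally show ?thesis using nf_append[of p q] by simp
qed

lemma peq_nf_eq: "peq u v \<Longrightarrow> nf u = nf v"
proof (induction rule: pres_eq.induct)
  case (rel l r x y)
  then obtain i where "l = rel i" "r = []" "i \<ge> 1" unfolding Pi2_rels_alt by auto
  then show ?case using nf_rel by simp
qed auto

lemma peq_iff_nf: "peq u v \<longleftrightarrow> nf u = nf v"
proof
  assume "peq u v" thus "nf u = nf v" by (rule peq_nf_eq)
next
  assume e: "nf u = nf v"
  have "peq u (nf u)" "peq v (nf v)" by (rule peq_nf)+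
  then show "peq u v" using e by (metis pres_eq.sym pres_eq.trans)
qed


lemma prefix_split: "p @ s = q @ r \<Longrightarrow> length q \<ge> length p \<Longrightarrow> \<exists>q'. q = p @ q' \<and> s = q' @ r"
  by (metis append_eq_append_conv_if append_take_drop_id)

lemma red1_loc: assumes len: "length (red1 (p @ t @ [x])) \<ge> length p"
  shows "red1 (p @ t @ [x]) = p @ red1 (t @ [x])"
proof (cases "\<exists>q i. i \<ge> 1 \<and> t @ [x] = q @ rel i")
  case True
  then obtain q i where "i \<ge> 1" "t @ [x] = q @ rel i" by blast
  then show ?thesis using red1_rel[of i q] red1_rel[of i "p @ q"] by simp
next
  case False
  note F = False
  show ?thesis
  proof (cases "\<exists>q i. i \<ge> 1 \<and> p @ t @ [x] = q @ rel i")
    case True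
    then obtain q i where qi: "i \<ge> 1" "p @ t @ [x] = q @ rel i" by blast
    then have "length q \<ge> length p" using qi red1_rel len by simp
    from prefix_split[OF qi(2) this] obtain q' where "t @ [x] = q' @ rel i" by blast
    then show ?thesis using F qi by blast
  next
    case False
    then show ?thesis using F red1_norel by simp
  qed
qed

lemma loc: "(\<forall>j \<le> length w. length (foldl step (p @ r) (take j w)) \<ge> length p) \<Longrightarrow>
   foldl step (p @ r) w = p @ foldl step r w"
proof (induction w rule: rev_induct)
  case Nil then show ?case by simp
next
  case (snoc x w)
  have "\<forall>j \<le> length w. length (foldl step (p @ r) (take j w)) \<ge> length p"
  proof (intro allI impI)
    fix j assume "j \<le> length w"
    then have "take j (w @ [x]) = take j w" by simp
    then show "length (foldl step (p @ r) (take j w)) \<ge> length p"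
      using snoc.prems \<open>j \<le> length w\<close> by (metis le_SucI length_append_singleton)
  qed
  then have IH: "foldl step (p @ r) w = p @ foldl step r w" by (rule snoc.IH)
  have "Suc (length w) \<le> length (w @ [x])" by simp
  from snoc.prems[rule_format, OF this]
  have "length (foldl step (p @ r) (take (Suc (length w)) (w @ [x]))) \<ge> length p" .
  then have "length (red1 (p @ foldl step r w @ [x])) \<ge> length p" using IH by (simp add: step_def)
  from red1_loc[OF this] have R: "step (p @ foldl step r w) x = p @ step (foldl step r w) x"
    by (simp only: step_def append.assoc)
  have "foldl step (p @ r) (w @ [x]) = step (p @ foldl step r w) x" using IH by simp
  then show ?case using R by simp
qed

inductive PD :: "gen list \<Rightarrow> bool" where
  PD_nil: "PD []"
| PD_snoc: "PD z \<Longrightarrow> p \<noteq> [] \<Longrightarrow> i \<ge> 1 \<Longrightarrow> q \<noteq> [] \<Longrightarrow> p @ q = rel i \<Longrightarrow> PD (z @ p)"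

lemma nf_irr_append: "irr z \<Longrightarrow> nf (z @ w) = foldl step z w"
  using nf_append[of z w] nf_irr by simp

lemma RU: "irr z \<Longrightarrow> nf (z @ y) = [] \<Longrightarrow> PD z"
proof (induction "length z" arbitrary: z y rule: less_induct)
  case less
  show ?case
  proof (cases "z = []")
    case True then show ?thesis by (simp add: PD_nil)
  next
    case False
    define H where "H j = length (nf (z @ take j y))" for j
    have Hy: "H (length y) < length z" using less.prems False by (simp add: H_def)
    obtain j where j: "H j < length z" "\<And>k. k < j \<Longrightarrow> \<not> H k < length z"
      using exists_least_iff[of "\<lambda>j. H j < length z"] Hy by blast
    have "j \<le> length y" using j(2)[of "length y"] Hy by force
    have "j \<noteq> 0"
    proof
      assume "j = 0" then show False using j(1) nf_irr[OF less.prems(1)] by (simp add: H_def)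
    qed
    then obtain j' where jj: "j = Suc j'" by (cases j) auto
    have j'y: "j' < length y" using \<open>j \<le> length y\<close> jj by simp
    define w where "w = take j' y"
    define x where "x = y ! j'"
    have tj: "take j y = w @ [x]" using j'y jj by (simp add: w_def x_def take_Suc_conv_app_nth)
    have "\<forall>k \<le> length w. length (foldl step (z @ []) (take k w)) \<ge> length z"
    proof (intro allI impI)
      fix k assume "k \<le> length w"
      then have "k < j" using jj j'y by (simp add: w_def)
      then have "\<not> H k < length z" by (rule j(2))
      moreover have "take k w = take k y" using \<open>k \<le> length w\<close> by (simp add: w_def)
      ultimately show "length (foldl step (z @ []) (take k w)) \<ge> length z"
        using nf_irr_append[OF less.prems(1)] by (simp add: H_def)
    qed
    from loc[OF this] have zw: "nf (z @ w) = z @ nf w"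
      using nf_irr_append[OF less.prems(1)] by (simp add: nf_def)
    have Hj: "length (red1 (z @ nf w @ [x])) < length z"
      using j(1) zw tj by (simp add: H_def nf_append[of "z @ w" "[x]", simplified] step_def)
    have "\<exists>q i. i \<ge> 1 \<and> z @ nf w @ [x] = q @ rel i"
    proof (rule ccontr)
      assume "\<not> ?thesis"
      then show False using Hj red1_norel by (metis length_append not_add_less1)
    qed
    then obtain q i where qi: "i \<ge> 1" "z @ nf w @ [x] = q @ rel i" by blast
    have red: "red1 (z @ nf w @ [x]) = q" using qi red1_rel by simp
    have "length q \<le> length z" using Hj red by simp
    from prefix_split[OF qi(2)[symmetric] this] obtain p where p: "z = q @ p" "p @ nf w @ [x] = rel i"
      by (metis append_eq_append_conv_if append_take_drop_id)
    have "p \<noteq> []" using Hj red p by auto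
    have irrq: "irr q" using less.prems(1) p irr_prefix by simp
    have "nf (z @ y) = foldl step (nf (z @ take j y)) (drop j y)"
      using nf_append[of "z @ take j y" "drop j y"] by simp
    also have "nf (z @ take j y) = q" using tj zw red by (simp add: nf_append[of "z @ w" "[x]", simplified] step_def)
    finally have "nf (q @ drop j y) = []" using less.prems(2) nf_irr_append[OF irrq] by simp
    then have "PD q" using less.hyps[of q] irrq \<open>p \<noteq> []\<close> p by auto
    then show ?thesis using p qi \<open>p \<noteq> []\<close> PD_snoc[of q p i "nf w @ [x]"] by simp
  qed
qed


fun sg :: "gen \<Rightarrow> gen" where "sg a = c" | "sg b = b" | "sg c = a"
definition tau :: "gen list \<Rightarrow> gen list" where "tau w = rev (map sg w)"

lemma sg_sg[simp]: "sg (sg x) = x" by (cases x) auto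
lemma tau_tau[simp]: "tau (tau w) = w" by (simp add: tau_def rev_map comp_def)
lemma tau_append[simp]: "tau (u @ v) = tau v @ tau u" by (simp add: tau_def)
lemma tau_nil[simp]: "tau [] = []" by (simp add: tau_def)
lemma tau_h[simp]: "tau (h i) = h i" by (simp add: tau_def h_def)
lemma tau_rel[simp]: "tau (rel i) = rel i" by (simp add: rel_def)

lemma peq_tau: "peq u v \<Longrightarrow> peq (tau u) (tau v)"
proof (induction rule: pres_eq.induct)
  case (refl u) then show ?case by (rule pres_eq.refl)
next
  case (sym u v) show ?case by (rule pres_eq.sym) (rule sym.IH)
next
  case (trans u v w) show ?case by (rule pres_eq.trans[OF trans.IH(1) trans.IH(2)])
next
  case (rel l r x y)
  then obtain i where "l = rel i" "r = []" "i \<ge> 1" unfolding Pi2_rels_alt by auto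
  then show ?case using peq_rel[of i "tau y" "tau x"] by simp
qed

lemma irr_tau: "irr s \<Longrightarrow> irr (tau s)"
proof (unfold irr_def, clarify)
  fix p q i assume "\<not> (\<exists>p q i. 1 \<le> i \<and> s = p @ rel i @ q)" "1 \<le> i" "tau s = p @ rel i @ q"
  moreover from this(3) have "s = tau q @ rel i @ tau p" by (metis tau_tau tau_append tau_rel append.assoc)
  ultimately show False by blast
qed

lemma nf_tau: "nf (tau w) = tau (nf w)"
proof -
  have "peq (tau w) (tau (nf w))" by (rule peq_tau[OF peq_nf])
  then have "nf (tau w) = nf (tau (nf w))" by (rule peq_nf_eq)
  also have "\<dots> = tau (nf w)" by (rule nf_irr[OF irr_tau[OF irr_nf]])
  finally show ?thesis .
qed

fun adjok :: "(gen \<Rightarrow> gen \<Rightarrow> bool) \<Rightarrow> gen list \<Rightarrow> bool" where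
  "adjok P (x # y # zs) = (P x y \<and> adjok P (y # zs))"
| "adjok P _ = True"

lemma adjok_Cons: "adjok P (x # ys) = (adjok P ys \<and> (ys \<noteq> [] \<longrightarrow> P x (hd ys)))"
  by (cases ys) auto

lemma adjok_append: "adjok P (xs @ ys) = (adjok P xs \<and> adjok P ys \<and> (xs \<noteq> [] \<and> ys \<noteq> [] \<longrightarrow> P (last xs) (hd ys)))"
  by (induction xs) (auto simp: adjok_Cons)

lemma adjok_rev: "adjok P (rev xs) = adjok (\<lambda>x y. P y x) xs"
  by (induction xs) (auto simp: adjok_Cons adjok_append hd_rev last_rev)

lemma adjok_map: "adjok P (map f xs) = adjok (\<lambda>x y. P (f x) (f y)) xs"
  by (induction xs) (auto simp: adjok_Cons hd_map)

lemma adjok_conj: "adjok (\<lambda>x y. P x y \<and> Q x y) xs = (adjok P xs \<and> adjok Q xs)"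
  by (induction xs) (auto simp: adjok_Cons)

lemma adjok_rep: "P x x \<Longrightarrow> adjok P (replicate n x)"
  by (induction n) (auto simp: adjok_Cons)

definition PR :: "gen \<Rightarrow> gen \<Rightarrow> bool" where
  "PR x y \<longleftrightarrow> \<not> ((x = c \<and> y = b) \<or> (x = a \<and> y = c) \<or> (x = c \<and> y = c))"
definition PL :: "gen \<Rightarrow> gen \<Rightarrow> bool" where
  "PL x y \<longleftrightarrow> \<not> ((x = b \<and> y = a) \<or> (x = a \<and> y = c) \<or> (x = a \<and> y = a))"

lemma adjok_PR_rel: "i \<ge> 1 \<Longrightarrow> adjok PR (rel i)"
  by (cases i) (simp_all add: rel_def h_def adjok_append adjok_Cons adjok_rep PR_def hd_replicate last_replicate)

lemma PD_okR: "PD z \<Longrightarrow> (z \<noteq> [] \<longrightarrow> hd z = a) \<and> adjok PR z"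
proof (induction rule: PD.induct)
  case PD_nil then show ?case by simp
next
  case (PD_snoc z p i q)
  have "adjok PR (p @ q)" using PD_snoc.hyps(5) adjok_PR_rel[OF PD_snoc.hyps(3)] by simp
  then have ap: "adjok PR p" by (simp add: adjok_append)
  have "hd (p @ q) = a" using PD_snoc.hyps(5) by (simp add: rel_def h_def)
  then have hp: "hd p = a" using PD_snoc.hyps(2) by simp
  have "PR (last z) (hd p)" using hp by (simp add: PR_def)
  then show ?case using PD_snoc.IH ap hp PD_snoc.hyps(2) by (cases "z = []") (auto simp: adjok_append)
qed

lemma PR_sg: "(\<lambda>x y. PR (sg y) (sg x)) = PL"
  by (intro ext, rename_tac x y, case_tac x; case_tac y) (auto simp: PR_def PL_def)

definition tw :: "nat list \<Rightarrow> gen list" where "tw ks = concat (map h ks)"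

definition Q :: "gen \<Rightarrow> gen \<Rightarrow> bool" where "Q x y \<longleftrightarrow> PR x y \<and> PL x y"

lemma tok_aux: "adjok Q (b # w) \<Longrightarrow> last (b # w) = c \<Longrightarrow> \<exists>j rest. w = replicate j b @ c # rest"
proof (induction w)
  case Nil then show ?case by simp
next
  case (Cons y w)
  have Qy: "Q b y" and aw: "adjok Q (y # w)" using Cons.prems(1) by auto
  show ?case
  proof (cases y)
    case a then show ?thesis using Qy by (simp add: Q_def PL_def)
  next
    case b
    then have "adjok Q (b # w)" "last (b # w) = c" using aw Cons.prems(2) by (auto split: if_splits)
    from Cons.IH[OF this] obtain j rest where "w = replicate j b @ c # rest" by blast
    then have "y # w = replicate (Suc j) b @ c # rest" using b by simp
    then show ?thesis by blast
  next
    case c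
    then have "y # w = replicate 0 b @ c # w" by simp
    then show ?thesis by blast
  qed
qed

lemma tok: "adjok Q z \<Longrightarrow> (z \<noteq> [] \<longrightarrow> hd z = a \<and> last z = c) \<Longrightarrow> \<exists>ks. z = tw ks \<and> (\<forall>i\<in>set ks. i \<ge> 1)"
proof (induction "length z" arbitrary: z rule: less_induct)
  case less
  show ?case
  proof (cases z)
    case Nil then show ?thesis by (intro exI[of _ "[]"]) (simp add: tw_def)
  next
    case (Cons x z1)
    then have x: "x = a" using less.prems by simp
    have "z1 \<noteq> []" using less.prems Cons x by auto
    then obtain y z2 where z1: "z1 = y # z2" by (cases z1) auto
    have "Q a y" using less.prems(1) Cons x z1 by simp
    then have y: "y = b" by (cases y) (auto simp: Q_def PR_def PL_def)
    have "adjok Q (b # z2)" "last (b # z2) = c" using less.prems Cons x z1 y by auto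
    from tok_aux[OF this] obtain j rest where z2: "z2 = replicate j b @ c # rest" by blast
    have zz: "z = h (Suc j) @ rest" using Cons x z1 y z2 by (simp add: h_def)
    have ar: "adjok Q rest" using less.prems(1) zz by (simp add: adjok_append)
    have "rest \<noteq> [] \<longrightarrow> hd rest = a \<and> last rest = c"
    proof
      assume "rest \<noteq> []"
      have "adjok Q ((a # b # replicate j b @ [c]) @ rest)" using less.prems(1) zz by (simp add: h_def)
      then have "Q (last (a # b # replicate j b @ [c])) (hd rest)" using \<open>rest \<noteq> []\<close>
        unfolding adjok_append by blast
      then have "Q c (hd rest)" by simp
      then have "hd rest = a" by (cases "hd rest") (auto simp: Q_def PR_def PL_def)
      moreover have "last rest = c" using less.prems(2) zz \<open>rest \<noteq> []\<close> by simp
      ultimately show "hd rest = a \<and> last rest = c" by simp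
    qed
    moreover have "length rest < length z" using zz by (simp add: h_def)
    ultimately obtain ks where "rest = tw ks" "\<forall>i\<in>set ks. i \<ge> 1" using less.hyps ar by blast
    then show ?thesis using zz by (intro exI[of _ "Suc j # ks"]) (simp add: tw_def)
  qed
qed

lemma unit_tw: "irr p \<Longrightarrow> nf (p @ q) = [] \<Longrightarrow> nf (q @ p) = [] \<Longrightarrow> \<exists>ks. p = tw ks \<and> (\<forall>i\<in>set ks. i \<ge> 1)"
proof -
  assume irr: "irr p" and r: "nf (p @ q) = []" and l: "nf (q @ p) = []"
  have "PD p" by (rule RU[OF irr r])
  then have R: "(p \<noteq> [] \<longrightarrow> hd p = a) \<and> adjok PR p" by (rule PD_okR)
  have "nf (tau p @ tau q) = []" using nf_tau[of "q @ p"] l by simp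
  then have "PD (tau p)" by (rule RU[OF irr_tau[OF irr]])
  then have L: "(tau p \<noteq> [] \<longrightarrow> hd (tau p) = a) \<and> adjok PR (tau p)" by (rule PD_okR)
  have "adjok PL p" using L PR_sg by (simp add: tau_def adjok_rev adjok_map)
  moreover have QQ: "Q = (\<lambda>x y. PR x y \<and> PL x y)" by (auto simp: Q_def fun_eq_iff)
  ultimately have "adjok Q p" using R unfolding QQ adjok_conj by blast
  moreover have "p \<noteq> [] \<longrightarrow> hd p = a \<and> last p = c"
  proof
    assume "p \<noteq> []"
    then have "sg (last p) = a" using L by (simp add: tau_def hd_rev last_map)
    then have "last p = c" by (cases "last p") auto
    then show "hd p = a \<and> last p = c" using R \<open>p \<noteq> []\<close> by simp
  qed
  ultimately show ?thesis by (rule tok)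
qed


lemma idem_split: "irr z \<Longrightarrow> nf (z @ z) = z \<Longrightarrow> \<exists>x x'. z = x @ x' \<and> nf (x' @ x) = []"
proof -
  assume irr: "irr z" and idem: "nf (z @ z) = z"
  define H where "H j = length (foldl step z (take j z))" for j
  obtain j0 where j0: "j0 \<le> length z" "\<And>j. j \<le> length z \<Longrightarrow> H j0 \<le> H j"
    using ex_has_least_nat[of "\<lambda>j. j \<le> length z" 0 H] by auto
  define k where "k = H j0"
  have Hz: "H (length z) = length z" using idem nf_irr_append[OF irr] by (simp add: H_def)
  have kz: "k \<le> length z" using j0(2)[of "length z"] Hz by (simp add: k_def)
  define P where "P = take k z"
  define R where "R = drop k z"
  have zPR: "z = P @ R" by (simp add: P_def R_def)
  have lenP: "length P = k" using kz by (simp add: P_def)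
  have bound: "length (foldl step (P @ R) (take j z)) \<ge> length P" if "j \<le> length z" for j
  proof -
    have "H j0 \<le> H j" using j0(2)[OF that] .
    then show ?thesis using lenP unfolding H_def k_def by (simp flip: zPR)
  qed
  have L1: "foldl step (P @ R) (take j0 z) = P @ foldl step R (take j0 z)"
  proof (rule loc, intro allI impI)
    fix j assume "j \<le> length (take j0 z)"
    then have "take j (take j0 z) = take (min j j0) z" "min j j0 \<le> length z" using j0(1) by (auto simp: min_def)
    then show "length (foldl step (P @ R) (take j (take j0 z))) \<ge> length P" using bound by simp
  qed
  have "length (foldl step (P @ R) (take j0 z)) = k" using zPR by (simp add: H_def k_def)
  then have R0: "foldl step R (take j0 z) = []" using L1 lenP by simp
  have L2: "foldl step (P @ R) z = P @ foldl step R z"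
  proof (rule loc, intro allI impI)
    fix j assume "j \<le> length z"
    then show "length (foldl step (P @ R) (take j z)) \<ge> length P" using bound by simp
  qed
  have "foldl step (P @ R) z = P @ R" using idem nf_irr_append[OF irr] zPR by simp
  then have RR: "foldl step R z = R" using L2 by simp
  have "foldl step R z = foldl step R (take j0 z @ drop j0 z)" by simp
  also have "\<dots> = foldl step (foldl step R (take j0 z)) (drop j0 z)" by (rule foldl_append)
  also have "\<dots> = nf (drop j0 z)" using R0 by (simp add: nf_def)
  also have "\<dots> = drop j0 z"
  proof -
    have "irr (drop j0 z)" using irr irr_suffix[of "take j0 z" "drop j0 z"] by simp
    then show ?thesis by (rule nf_irr)
  qed
  finally have X: "foldl step R z = drop j0 z" .
  have "drop j0 z = R" using X RR by simp
  then have "length (drop j0 z) = length (drop k z)" by (simp add: R_def)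
  then have "j0 = k" using j0(1) kz by simp
  have "irr (P @ R)" using irr zPR by metis
  then have irrR: "irr R" by (rule irr_suffix)
  have "take j0 z = P" using \<open>j0 = k\<close> P_def by simp
  then have "nf (R @ P) = foldl step R (take j0 z)" using nf_irr_append[OF irrR] by simp
  then have "nf (R @ P) = []" using R0 by simp
  then show ?thesis using zPR by blast
qed


lemma tw_append[simp]: "tw (xs @ ys) = tw xs @ tw ys" by (simp add: tw_def)
lemma tw_nil[simp]: "tw [] = []" by (simp add: tw_def)
lemma tw_Cons[simp]: "tw (j # js) = h j @ tw js" by (simp add: tw_def)
lemma h_ne[simp]: "h j \<noteq> []" by (simp add: h_def)

lemma foldl_tw_h: "\<exists>ms. foldl step (tw ks) (h j) = tw ms \<and> set ms \<subseteq> set ks \<union> {j}"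
proof (cases "\<exists>q k. k \<ge> 1 \<and> tw ks @ h j = q @ rel k")
  case True
  then obtain q k where qk: "k \<ge> 1" "tw ks @ h j = q @ rel k" by blast
  then have "tw ks @ h j = (q @ h k) @ h k" by (simp add: rel_def)
  from h_suffix_uniq[OF this] have kj: "k = j" and tq: "tw ks = q @ h j" by auto
  have "ks \<noteq> []" using tq by auto
  then obtain ks' m where ks: "ks = ks' @ [m]" by (cases ks rule: rev_cases) auto
  then have "tw ks' @ h m = q @ h j" using tq by simp
  from h_suffix_uniq[OF this] have "q = tw ks'" by simp
  moreover have "foldl step (tw ks) (h j) = q" using foldl_h qk red1_rel by simp
  ultimately show ?thesis using ks by (intro exI[of _ ks']) auto
next
  case False
  then have "foldl step (tw ks) (h j) = tw (ks @ [j])" using foldl_h red1_norel by simp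
  then show ?thesis by (intro exI[of _ "ks @ [j]"]) auto
qed

lemma foldl_tw: "\<exists>ms. foldl step (tw ks) (tw js) = tw ms \<and> set ms \<subseteq> set ks \<union> set js"
proof (induction js arbitrary: ks)
  case Nil then show ?case by (intro exI[of _ ks]) simp
next
  case (Cons j js)
  obtain ms where ms: "foldl step (tw ks) (h j) = tw ms" "set ms \<subseteq> set ks \<union> {j}" using foldl_tw_h by blast
  obtain ns where "foldl step (tw ms) (tw js) = tw ns" "set ns \<subseteq> set ms \<union> set js" using Cons.IH by blast
  then show ?case using ms by (intro exI[of _ ns]) auto
qed

lemma nf_tw_append: "\<exists>ms. nf (tw ks @ tw js) = tw ms \<and> set ms \<subseteq> set ks \<union> set js"
proof -
  obtain ms where ms: "nf (tw ks) = tw ms" "set ms \<subseteq> set ks"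
    using foldl_tw[of "[]" ks] by (auto simp: nf_def)
  obtain ns where "foldl step (tw ms) (tw js) = tw ns" "set ns \<subseteq> set ms \<union> set js" using foldl_tw by blast
  then show ?thesis using ms by (intro exI[of _ ns]) (auto simp: nf_append)
qed

lemma irr_h: "irr (h i)"
proof (unfold irr_def, clarify)
  fix p q k assume "h i = p @ rel k @ q"
  then have "h i = (p @ h k) @ (h k @ q)" by (simp add: rel_def)
  then have "butlast (h i) = p @ h k @ butlast (h k @ q)" by (simp add: butlast_append)
  then have "c \<in> set (butlast (h i))" by (simp add: h_def)
  then show False by (simp add: h_def butlast_append)
qed

lemma rep_c_eq: "replicate i b @ c # X = replicate j b @ c # Y \<Longrightarrow> i = j"
proof (induction i arbitrary: j)
  case 0 then show ?case by (cases j) auto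
next
  case (Suc i) then show ?case by (cases j) auto
qed

lemma h_not_tw: "\<forall>i\<in>set ks. i \<le> N \<Longrightarrow> h (Suc N) \<noteq> tw ks"
proof
  assume ks: "\<forall>i\<in>set ks. i \<le> N" and e: "h (Suc N) = tw ks"
  show False
  proof (cases ks)
    case Nil then show ?thesis using e by simp
  next
    case (Cons m ks')
    then have "replicate (Suc N) b @ c # [] = replicate m b @ c # tw ks'" using e by (simp add: h_def)
    then have "m = Suc N" using rep_c_eq by metis
    then show False using ks Cons by auto
  qed
qed


abbreviation cls where "cls \<equiv> pres_class Pi2_rels"

lemma cls_eq_iff: "cls u = cls v \<longleftrightarrow> nf u = nf v"
proof
  assume "cls u = cls v"
  then have "v \<in> cls u" by (simp add: pres_class_def pres_eq.refl)
  then show "nf u = nf v" by (simp add: pres_class_def peq_nf_eq)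
next
  assume "nf u = nf v"
  then have "peq u v" using peq_iff_nf by simp
  then show "cls u = cls v" unfolding pres_class_def
    by (auto intro: pres_eq.trans pres_eq.sym)
qed

lemma Pi2_carrier: "carrier Pi2 = range cls" by (simp add: Pi2_def pres_monoid_def)
lemma Pi2_one: "one Pi2 = cls []" by (simp add: Pi2_def pres_monoid_def)
lemma Pi2_mult: "cls u \<otimes>\<^bsub>Pi2\<^esub> cls v = cls (u @ v)"
proof -
  have "{w. \<exists>x\<in>cls u. \<exists>y\<in>cls v. peq (x @ y) w} = cls (u @ v)"
  proof (rule Set.set_eqI, rule iffI)
    fix w assume "w \<in> {w. \<exists>x\<in>cls u. \<exists>y\<in>cls v. peq (x @ y) w}"
    then obtain x y where "peq u x" "peq v y" "peq (x @ y) w" by (auto simp: pres_class_def)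
    then show "w \<in> cls (u @ v)" by (simp add: pres_class_def) (metis pres_eq_app pres_eq.trans)
  next
    fix w assume "w \<in> cls (u @ v)"
    then show "w \<in> {w. \<exists>x\<in>cls u. \<exists>y\<in>cls v. peq (x @ y) w}"
      by (auto simp: pres_class_def intro: pres_eq.refl)
  qed
  then show ?thesis by (simp add: Pi2_def pres_monoid_def)
qed

lemma nf_nil: "nf [] = []" by (simp add: nf_def)

lemma nf_cong: "nf u = nf u' \<Longrightarrow> nf (p @ u @ q) = nf (p @ u' @ q)"
  using pres_eq_cong peq_iff_nf by metis

lemma nf_cong1: "nf u = nf u' \<Longrightarrow> nf (p @ u) = nf (p @ u')"
  using nf_cong[of u u' p "[]"] by simp
lemma nf_cong2: "nf u = nf u' \<Longrightarrow> nf (u @ q) = nf (u' @ q)"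
  using nf_cong[of u u' "[]" q] by simp

lemma nf_nf_left: "nf (nf u @ v) = nf (u @ v)"
  by (rule nf_cong2) (simp add: nf_irr irr_nf)
lemma nf_nf_right: "nf (u @ nf v) = nf (u @ v)"
  by (rule nf_cong1) (simp add: nf_irr irr_nf)

lemma local_simps: "carrier (local_monoid M e) = {e \<otimes>\<^bsub>M\<^esub> x \<otimes>\<^bsub>M\<^esub> e | x. x \<in> carrier M}"
  "mult (local_monoid M e) = mult M" "one (local_monoid M e) = e"
  by (simp_all add: local_monoid_def)

locale idem_setup =
  fixes X Y :: "gen list"
  assumes YX: "nf (Y @ X) = []"
begin

definition e where "e = cls (X @ Y)"
abbreviation L where "L \<equiv> local_monoid Pi2 e"

lemma cancel: "nf (p @ Y @ X @ q) = nf (p @ q)"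
  using nf_cong[of "Y @ X" "[]" p q] YX nf_nil by simp

lemma carrL: "g \<in> carrier L \<longleftrightarrow> (\<exists>u. g = cls (X @ Y @ u @ X @ Y))"
proof
  assume "g \<in> carrier L"
  then obtain m where "m \<in> carrier Pi2" "g = e \<otimes>\<^bsub>Pi2\<^esub> m \<otimes>\<^bsub>Pi2\<^esub> e" by (auto simp: local_simps)
  then obtain u where "g = e \<otimes>\<^bsub>Pi2\<^esub> cls u \<otimes>\<^bsub>Pi2\<^esub> e" by (auto simp: Pi2_carrier)
  then show "\<exists>u. g = cls (X @ Y @ u @ X @ Y)" by (intro exI[of _ u]) (simp add: e_def Pi2_mult)
next
  assume "\<exists>u. g = cls (X @ Y @ u @ X @ Y)"
  then obtain u where "g = cls (X @ Y @ u @ X @ Y)" by blast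
  then have "g = e \<otimes>\<^bsub>Pi2\<^esub> cls u \<otimes>\<^bsub>Pi2\<^esub> e" by (simp add: e_def Pi2_mult)
  then show "g \<in> carrier L" unfolding local_simps Pi2_carrier by blast
qed

lemma absorb: "g \<in> carrier L \<Longrightarrow> g = cls w \<Longrightarrow> nf (X @ Y @ w) = nf w \<and> nf (w @ X @ Y) = nf w"
proof -
  assume "g \<in> carrier L" "g = cls w"
  then obtain u where "nf w = nf (X @ Y @ u @ X @ Y)" using carrL cls_eq_iff by metis
  moreover have "nf (X @ Y @ (X @ Y @ u @ X @ Y)) = nf (X @ Y @ u @ X @ Y)"
    using cancel[of X "Y @ u @ X @ Y"] by simp
  moreover have "nf ((X @ Y @ u @ X @ Y) @ X @ Y) = nf (X @ Y @ u @ X @ Y)"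
    using cancel[of "X @ Y @ u @ X" Y] by simp
  ultimately show ?thesis using nf_cong1[of w "X @ Y @ u @ X @ Y" "X @ Y"]
      nf_cong2[of w "X @ Y @ u @ X @ Y" "X @ Y"] by simp
qed

lemma carrL_cls: "g \<in> carrier L \<Longrightarrow> \<exists>w. g = cls w"
  using carrL by blast

lemma unitL: "g \<in> Units L \<Longrightarrow> g = cls w \<Longrightarrow> \<exists>ks. nf (Y @ w @ X) = tw ks"
proof -
  assume gU: "g \<in> Units L" and gw: "g = cls w"
  then have gL: "g \<in> carrier L" and "\<exists>y\<in>carrier L. y \<otimes>\<^bsub>L\<^esub> g = e \<and> g \<otimes>\<^bsub>L\<^esub> y = e"
    by (auto simp: Units_def local_simps)
  then obtain y where yL: "y \<in> carrier L" and yg: "y \<otimes>\<^bsub>Pi2\<^esub> g = e" "g \<otimes>\<^bsub>Pi2\<^esub> y = e"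
    by (auto simp: local_simps)
  obtain v where yv: "y = cls v" using carrL_cls[OF yL] by blast
  have wv: "nf (w @ v) = nf (X @ Y)" using yg(2) gw yv by (simp add: Pi2_mult e_def cls_eq_iff)
  have vw: "nf (v @ w) = nf (X @ Y)" using yg(1) gw yv by (simp add: Pi2_mult e_def cls_eq_iff)
  have aw: "nf (w @ X @ Y) = nf w" using absorb[OF gL gw] by simp
  have av: "nf (v @ X @ Y) = nf v" using absorb[OF yL yv] by simp
  define p where "p = nf (Y @ w @ X)"
  define q where "q = Y @ v @ X"
  have "nf (p @ q) = nf (Y @ w @ X @ Y @ v @ X)" using nf_nf_left[of "Y @ w @ X" q] by (simp add: p_def q_def)
  also have "\<dots> = nf (Y @ w @ v @ X)" using nf_cong[OF aw, of Y "v @ X"] by simp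
  also have "\<dots> = nf (Y @ X @ Y @ X)" using nf_cong[OF wv, of Y X] by simp
  also have "\<dots> = []" using cancel[of "[]" "Y @ X"] YX by simp
  finally have pq: "nf (p @ q) = []" .
  have "nf (q @ p) = nf (Y @ v @ X @ Y @ w @ X)" using nf_nf_right[of q "Y @ w @ X"] by (simp add: p_def q_def)
  also have "\<dots> = nf (Y @ v @ w @ X)" using nf_cong[OF av, of Y "w @ X"] by simp
  also have "\<dots> = nf (Y @ X @ Y @ X)" using nf_cong[OF vw, of Y X] by simp
  also have "\<dots> = []" using cancel[of "[]" "Y @ X"] YX by simp
  finally have qp: "nf (q @ p) = []" .
  have "irr p" by (simp add: p_def irr_nf)
  from unit_tw[OF this pq qp] show ?thesis by (auto simp: p_def)
qed

definition TN :: "nat \<Rightarrow> gen list set \<Rightarrow> bool" where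
  "TN N g \<longleftrightarrow> (\<forall>w. g = cls w \<longrightarrow> (\<exists>ks. nf (Y @ w @ X) = tw ks \<and> (\<forall>i\<in>set ks. i \<le> N)))"

lemma psi_inv: "cls w = cls w' \<Longrightarrow> nf (Y @ w @ X) = nf (Y @ w' @ X)"
  using nf_cong cls_eq_iff by metis

lemma TN_mono: "TN N g \<Longrightarrow> N \<le> M \<Longrightarrow> TN M g"
  unfolding TN_def
proof (intro allI impI)
  fix w assume A: "\<forall>w. g = cls w \<longrightarrow> (\<exists>ks. nf (Y @ w @ X) = tw ks \<and> (\<forall>i\<in>set ks. i \<le> N))"
    and NM: "N \<le> M" and gw: "g = cls w"
  then obtain ks where "nf (Y @ w @ X) = tw ks" "\<forall>i\<in>set ks. i \<le> N" by blast
  then show "\<exists>ks. nf (Y @ w @ X) = tw ks \<and> (\<forall>i\<in>set ks. i \<le> M)" using NM by (meson order_trans)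
qed

lemma unit_TN: "g \<in> Units L \<Longrightarrow> \<exists>N. TN N g"
proof -
  assume gU: "g \<in> Units L"
  then have "g \<in> carrier L" by (simp add: Units_def)
  then obtain w where gw: "g = cls w" using carrL_cls by blast
  obtain ks where ks: "nf (Y @ w @ X) = tw ks" using unitL[OF gU gw] by blast
  have "TN (sum_list ks) g" unfolding TN_def
  proof (intro allI impI)
    fix w' assume "g = cls w'"
    then have "nf (Y @ w' @ X) = tw ks" using ks psi_inv gw by metis
    moreover have "\<forall>i\<in>set ks. i \<le> sum_list ks" using member_le_sum_list by blast
    ultimately show "\<exists>ks'. nf (Y @ w' @ X) = tw ks' \<and> (\<forall>i\<in>set ks'. i \<le> sum_list ks)" by blast
  qed
  then show ?thesis by blast
qed

lemma finite_TN: "finite S \<Longrightarrow> S \<subseteq> Units L \<Longrightarrow> \<exists>N. \<forall>g\<in>S. TN N g"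
proof (induction S rule: finite_induct)
  case empty then show ?case by simp
next
  case (insert x F)
  obtain N1 where "\<forall>g\<in>F. TN N1 g" using insert by auto
  moreover obtain N2 where "TN N2 x" using unit_TN insert.prems by auto
  ultimately have "\<forall>g\<in>insert x F. TN (max N1 N2) g"
    using TN_mono[of N1 _ "max N1 N2"] TN_mono[of N2 x "max N1 N2"] by auto
  then show ?case by blast
qed


lemma e_carrL: "e \<in> carrier L"
proof -
  have "nf (X @ Y @ [] @ X @ Y) = nf (X @ Y)" using cancel[of X Y] by simp
  then have "e = cls (X @ Y @ [] @ X @ Y)" by (simp add: e_def cls_eq_iff)
  then show ?thesis using carrL by blast
qed

lemma TN_e: "TN N e"
  unfolding TN_def
proof (intro allI impI)
  fix w assume "e = cls w"
  then have "nf w = nf (X @ Y)" by (simp add: e_def cls_eq_iff)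
  then have "nf (Y @ w @ X) = nf (Y @ X @ Y @ X)" using nf_cong[of w "X @ Y" Y X] by simp
  also have "\<dots> = []" using cancel[of "[]" "Y @ X"] YX by simp
  finally show "\<exists>ks. nf (Y @ w @ X) = tw ks \<and> (\<forall>i\<in>set ks. i \<le> N)" by (intro exI[of _ "[]"]) simp
qed

lemma units_of_simps: "carrier (units_of L) = Units L" "mult (units_of L) = mult Pi2" "one (units_of L) = e"
  by (simp_all add: units_of_def local_simps)

lemma UnitsL_carr: "g \<in> Units L \<Longrightarrow> g \<in> carrier L" by (simp add: Units_def)

lemma inv_in: "g \<in> Units L \<Longrightarrow> m_inv (units_of L) g \<in> Units L"
proof -
  assume gU: "g \<in> Units L"
  let ?P = "\<lambda>y. y \<in> Units L \<and> g \<otimes>\<^bsub>Pi2\<^esub> y = e \<and> y \<otimes>\<^bsub>Pi2\<^esub> g = e"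
  obtain x where xL: "x \<in> carrier L" and xg: "x \<otimes>\<^bsub>Pi2\<^esub> g = e" "g \<otimes>\<^bsub>Pi2\<^esub> x = e"
    using gU by (auto simp: Units_def local_simps)
  have "x \<in> Units L" using xL xg gU by (auto simp: Units_def local_simps)
  then have ex: "?P x" using xg by simp
  have uniq: "y1 = y2" if P1: "?P y1" and P2: "?P y2" for y1 y2
  proof -
    obtain u where gu: "g = cls u" using carrL_cls[OF UnitsL_carr[OF gU]] by blast
    obtain v1 where v1: "y1 = cls v1" using carrL_cls[OF UnitsL_carr] P1 by blast
    obtain v2 where v2: "y2 = cls v2" using carrL_cls[OF UnitsL_carr] P2 by blast
    have e1: "nf (v1 @ u) = nf (X @ Y)" using P1 gu v1 by (simp add: Pi2_mult e_def cls_eq_iff)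
    have e2: "nf (u @ v2) = nf (X @ Y)" using P2 gu v2 by (simp add: Pi2_mult e_def cls_eq_iff)
    have "nf v1 = nf (v1 @ X @ Y)" using absorb[OF UnitsL_carr v1] P1 by simp
    also have "\<dots> = nf (v1 @ u @ v2)" using nf_cong1[OF e2[symmetric], of v1] by simp
    also have "\<dots> = nf (X @ Y @ v2)" using nf_cong2[OF e1, of v2] by simp
    also have "\<dots> = nf v2" using absorb[OF UnitsL_carr v2] P2 by simp
    finally show ?thesis using v1 v2 cls_eq_iff by simp
  qed
  have "?P (THE y. ?P y)" by (rule theI[of ?P x, OF ex uniq[OF _ ex]])
  moreover have "m_inv (units_of L) g = (THE y. ?P y)"
    unfolding m_inv_def units_of_simps by (intro arg_cong[where f = The] ext) blast
  ultimately show ?thesis by simp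
qed

lemma not_fg: "\<not> finitely_generated_group (units_of L)"
proof
  assume "finitely_generated_group (units_of L)"
  then obtain S where S: "finite S" "S \<subseteq> Units L" "generate (units_of L) S = Units L"
    unfolding finitely_generated_group_def units_of_simps by blast
  define S' where "S' = S \<union> m_inv (units_of L) ` S"
  have "finite S'" "S' \<subseteq> Units L" using S inv_in by (auto simp: S'_def)
  then obtain N where N: "\<forall>g\<in>S'. TN N g" using finite_TN by blast
  have inv: "g \<in> carrier L \<and> TN N g" if "g \<in> generate (units_of L) S" for g
    using that
  proof (induction rule: generate.induct)
    case one then show ?case using e_carrL TN_e by (simp add: units_of_simps)
  next
    case (incl h) then show ?case using N S UnitsL_carr by (auto simp: S'_def)
  next
    case (inv h)
    then have "m_inv (units_of L) h \<in> S'" by (simp add: S'_def)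
    then show ?case using N S UnitsL_carr \<open>S' \<subseteq> Units L\<close> by blast
  next
    case (eng g1 g2)
    then have g1L: "g1 \<in> carrier L" and g2L: "g2 \<in> carrier L" and T1: "TN N g1" and T2: "TN N g2" by auto
    obtain w1 where w1: "g1 = cls w1" using carrL_cls[OF g1L] by blast
    obtain w2 where w2: "g2 = cls w2" using carrL_cls[OF g2L] by blast
    have prod: "g1 \<otimes>\<^bsub>units_of L\<^esub> g2 = cls (w1 @ w2)" using w1 w2 by (simp add: units_of_simps Pi2_mult)
    have a1: "nf (X @ Y @ w1) = nf w1" "nf (w1 @ X @ Y) = nf w1" using absorb[OF g1L w1] by auto
    have a2: "nf (X @ Y @ w2) = nf w2" "nf (w2 @ X @ Y) = nf w2" using absorb[OF g2L w2] by auto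
    have "nf (X @ Y @ (w1 @ w2) @ X @ Y) = nf (w1 @ w2 @ X @ Y)"
      using nf_cong2[OF a1(1), of "w2 @ X @ Y"] by simp
    also have "\<dots> = nf (w1 @ w2)" using nf_cong1[OF a2(2), of w1] by simp
    finally have "cls (w1 @ w2) = cls (X @ Y @ (w1 @ w2) @ X @ Y)" by (simp add: cls_eq_iff)
    then have C: "g1 \<otimes>\<^bsub>units_of L\<^esub> g2 \<in> carrier L" using prod carrL by metis
    have T: "TN N (g1 \<otimes>\<^bsub>units_of L\<^esub> g2)"
      unfolding TN_def
    proof (intro allI impI)
      fix w assume "g1 \<otimes>\<^bsub>units_of L\<^esub> g2 = cls w"
      then have "cls w = cls (w1 @ w2)" using prod by simp
      then have "nf (Y @ w @ X) = nf (Y @ w1 @ w2 @ X)" using psi_inv by simp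
      also have "\<dots> = nf (Y @ w1 @ X @ Y @ w2 @ X)" using nf_cong[OF a1(2)[symmetric], of Y "w2 @ X"] by simp
      also have "\<dots> = nf (nf (Y @ w1 @ X) @ nf (Y @ w2 @ X))"
        using nf_nf_left[of "Y @ w1 @ X" "nf (Y @ w2 @ X)"] nf_nf_right[of "Y @ w1 @ X" "Y @ w2 @ X"] by simp
      finally have E: "nf (Y @ w @ X) = nf (nf (Y @ w1 @ X) @ nf (Y @ w2 @ X))" .
      obtain k1 where k1: "nf (Y @ w1 @ X) = tw k1" "\<forall>i\<in>set k1. i \<le> N" using T1 w1 unfolding TN_def by blast
      obtain k2 where k2: "nf (Y @ w2 @ X) = tw k2" "\<forall>i\<in>set k2. i \<le> N" using T2 w2 unfolding TN_def by blast
      obtain ms where "nf (tw k1 @ tw k2) = tw ms" "set ms \<subseteq> set k1 \<union> set k2" using nf_tw_append by blast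
      then show "\<exists>ks. nf (Y @ w @ X) = tw ks \<and> (\<forall>i\<in>set ks. i \<le> N)" using E k1 k2 by (intro exI[of _ ms]) auto
    qed
    show ?case using C T by simp
  qed
  define g0 where "g0 = cls (X @ h (Suc N) @ Y)"
  have "nf (X @ Y @ (X @ h (Suc N) @ Y) @ X @ Y) = nf (X @ h (Suc N) @ Y)"
    using cancel[of X "h (Suc N) @ Y @ X @ Y"] cancel[of "X @ h (Suc N)" Y] by simp
  then have g0L: "g0 \<in> carrier L" unfolding g0_def carrL cls_eq_iff by metis
  have "nf ((X @ h (Suc N) @ Y) @ (X @ h (Suc N) @ Y)) = nf (X @ h (Suc N) @ h (Suc N) @ Y)"
    using cancel[of "X @ h (Suc N)" "h (Suc N) @ Y"] by simp
  also have "\<dots> = nf (X @ Y)" using nf_rel[of "Suc N" X Y] by (simp add: rel_def)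
  finally have gg: "g0 \<otimes>\<^bsub>Pi2\<^esub> g0 = e" by (simp add: g0_def e_def Pi2_mult cls_eq_iff)
  have "g0 \<in> Units L" using g0L gg by (auto simp: Units_def local_simps)
  then have "g0 \<in> generate (units_of L) S" using S by simp
  then have "TN N g0" using inv by blast
  then obtain ks where ks: "nf (Y @ (X @ h (Suc N) @ Y) @ X) = tw ks" "\<forall>i\<in>set ks. i \<le> N"
    unfolding TN_def g0_def by blast
  have "nf (Y @ (X @ h (Suc N) @ Y) @ X) = nf (h (Suc N))"
    using cancel[of "[]" "h (Suc N) @ Y @ X"] cancel[of "h (Suc N)" "[]"] by simp
  also have "\<dots> = h (Suc N)" by (rule nf_irr[OF irr_h])
  finally show False using ks h_not_tw by metis
qed

end

lemma part2: "idempotent_of Pi2 e \<Longrightarrow> \<not> finitely_generated_group (maximal_subgroup Pi2 e)"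
proof -
  assume "idempotent_of Pi2 e"
  then obtain w where ew: "e = cls w" and ee: "e \<otimes>\<^bsub>Pi2\<^esub> e = e"
    by (auto simp: idempotent_of_def Pi2_carrier)
  then have "nf (w @ w) = nf w" by (simp add: Pi2_mult cls_eq_iff)
  moreover have "nf (w @ w) = nf (nf w @ nf w)" using nf_nf_left nf_nf_right by simp
  ultimately have "nf (nf w @ nf w) = nf w" by simp
  then obtain X Y where XY: "nf w = X @ Y" "nf (Y @ X) = []" using idem_split[OF irr_nf] by blast
  interpret idem_setup X Y using XY(2) by unfold_locales
  have "nf (X @ Y) = X @ Y" using XY(1) irr_nf nf_irr by metis
  then have "e = idem_setup.e X Y" using ew XY(1) by (simp add: e_def cls_eq_iff)
  then show ?thesis using not_fg by (simp add: maximal_subgroup_def)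
qed


inductive Dw and Kw where
  Dw_nil: "Dw []"
| Dw_app: "Dw u \<Longrightarrow> Dw v \<Longrightarrow> Dw (u @ v)"
| Dw_rel: "Dw d1 \<Longrightarrow> Kw k \<Longrightarrow> Dw d2 \<Longrightarrow> Dw (a # d1 @ b # k @ b # d2 @ [c])"
| Kw_b: "Dw d1 \<Longrightarrow> Kw k \<Longrightarrow> Dw d2 \<Longrightarrow> Kw (d1 @ b # k @ b # d2)"
| Kw_c: "Dw d1 \<Longrightarrow> Dw d2 \<Longrightarrow> Dw d3 \<Longrightarrow> Kw (d1 @ c # d2 @ a # d3)"

inductive IL :: "gen list \<Rightarrow> gen list \<Rightarrow> bool" where
  IL_nil: "IL [] []"
| IL_cons: "Dw d \<Longrightarrow> IL r u \<Longrightarrow> IL (x # r) (d @ x # u)"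

lemma IL_append1: "IL (r1 @ r2) u \<Longrightarrow> \<exists>u1 u2. u = u1 @ u2 \<and> IL r1 u1 \<and> IL r2 u2"
proof (induction r1 arbitrary: u)
  case Nil then show ?case using IL_nil by force
next
  case (Cons x r1)
  from Cons.prems obtain d u' where "Dw d" "IL (r1 @ r2) u'" "u = d @ x # u'"
    by (cases rule: IL.cases) auto
  with Cons.IH obtain u1 u2 where "u' = u1 @ u2" "IL r1 u1" "IL r2 u2" by blast
  then show ?case using \<open>Dw d\<close> \<open>u = d @ x # u'\<close> IL_cons[of d r1 u1 x] by (intro exI[of _ "d @ x # u1"] exI[of _ u2]) auto
qed

lemma IL_append2: "IL r1 u1 \<Longrightarrow> IL r2 u2 \<Longrightarrow> IL (r1 @ r2) (u1 @ u2)"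
proof (induction rule: IL.induct)
  case IL_nil then show ?case by simp
next
  case (IL_cons d r u x)
  have "IL (x # (r @ r2)) (d @ x # (u @ u2))"
    by (rule IL.IL_cons[OF IL_cons.hyps(1) IL_cons.IH[OF IL_cons.prems]])
  then show ?case by simp
qed

lemma IL_single: "IL [x] u \<Longrightarrow> \<exists>d. Dw d \<and> u = d @ [x]"
proof -
  assume "IL [x] u"
  then obtain d u' where "Dw d" "IL [] u'" "u = d @ x # u'" by (cases rule: IL.cases) auto
  moreover from \<open>IL [] u'\<close> have "u' = []" by (cases rule: IL.cases) auto
  ultimately show ?thesis by auto
qed

lemma IL_single2: "Dw d \<Longrightarrow> IL [x] (d @ [x])"
  using IL_cons[of d "[]" "[]" x] IL_nil by simp

abbreviation BB :: "nat \<Rightarrow> gen list" where "BB j \<equiv> replicate j b @ c # a # replicate j b"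

lemma BB_Suc: "BB (Suc j) = [b] @ BB j @ [b]"
  by (simp add: replicate_append_same[symmetric])

lemma K_lemma: "IL (BB j) u \<Longrightarrow> Dw d \<Longrightarrow> Kw (u @ d)"
proof (induction j arbitrary: u d)
  case 0
  then have "IL ([c] @ [a]) u" by simp
  then obtain u1 u2 where "u = u1 @ u2" "IL [c] u1" "IL [a] u2" using IL_append1 by blast
  then obtain d1 d2 where "Dw d1" "Dw d2" "u = (d1 @ [c]) @ (d2 @ [a])" using IL_single by metis
  then show ?case using Kw_c[of d1 d2 d] 0 by simp
next
  case (Suc j)
  then have "IL ([b] @ BB j @ [b]) u" using BB_Suc by metis
  then obtain u1 u' where "u = u1 @ u'" "IL [b] u1" "IL (BB j @ [b]) u'" using IL_append1 by blast
  moreover obtain u2 u3 where "u' = u2 @ u3" "IL (BB j) u2" "IL [b] u3" using IL_append1 calculation(3) by blast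
  moreover obtain d1 where "Dw d1" "u1 = d1 @ [b]" using IL_single calculation(2) by blast
  moreover obtain d2 where "Dw d2" "u3 = d2 @ [b]" using IL_single calculation(6) by blast
  moreover have "Kw (u2 @ d2)" using Suc.IH calculation by blast
  ultimately show ?case using Kw_b[of d1 "u2 @ d2" d] Suc.prems(2) by simp
qed

lemma L_lemma: "IL (a # BB (Suc j)) u \<Longrightarrow> Dw d \<Longrightarrow> Dw (u @ d @ [c])"
proof -
  assume IL: "IL (a # BB (Suc j)) u" and d: "Dw d"
  have "a # BB (Suc j) = [a] @ [b] @ BB j @ [b]" using BB_Suc by simp
  with IL have "IL ([a] @ [b] @ BB j @ [b]) u" by simp
  then obtain u0 v0 where "u = u0 @ v0" "IL [a] u0" "IL ([b] @ BB j @ [b]) v0" using IL_append1 by blast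
  moreover obtain u1 u' where "v0 = u1 @ u'" "IL [b] u1" "IL (BB j @ [b]) u'" using IL_append1 calculation(3) by blast
  moreover obtain u2 u3 where "u' = u2 @ u3" "IL (BB j) u2" "IL [b] u3" using IL_append1 calculation(6) by blast
  moreover obtain d0 where "Dw d0" "u0 = d0 @ [a]" using IL_single calculation(2) by blast
  moreover obtain d1 where "Dw d1" "u1 = d1 @ [b]" using IL_single calculation(5) by blast
  moreover obtain d2 where "Dw d2" "u3 = d2 @ [b]" using IL_single calculation(9) by blast
  moreover have "Kw (u2 @ d2)" using K_lemma calculation by blast
  ultimately show ?thesis using Dw_app[OF \<open>Dw d0\<close> Dw_rel[of d1 "u2 @ d2" d]] d by simp
qed

lemma rel_butlast: "rel (Suc j) = (a # BB (Suc j)) @ [c]"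
  by (simp add: rel_def h_def)

lemma B_lemma: "\<exists>u' d. IL (nf u) u' \<and> Dw d \<and> u = u' @ d"
proof (induction u rule: rev_induct)
  case Nil then show ?case using IL_nil Dw_nil by (auto simp: nf_def)
next
  case (snoc x u)
  then obtain u' d where IH: "IL (nf u) u'" "Dw d" "u = u' @ d" by blast
  show ?case
  proof (cases "\<exists>q i. i \<ge> 1 \<and> nf u @ [x] = q @ rel i")
    case True
    then obtain q i where qi: "i \<ge> 1" "nf u @ [x] = q @ rel i" by blast
    then obtain j where j: "i = Suc j" by (cases i) auto
    have "nf (u @ [x]) = red1 (nf u @ [x])" by (simp only: nf_snoc step_def)
    then have red: "nf (u @ [x]) = q" using qi red1_rel by simp
    have "nf u @ [x] = (q @ a # BB (Suc j)) @ [c]" using qi(2) j rel_butlast by simp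
    then have "nf u = q @ a # BB (Suc j) \<and> x = c" by (simp only: append1_eq_conv)
    then have x: "x = c" and nu: "nf u = q @ a # BB (Suc j)" by auto
    have "IL (q @ a # BB (Suc j)) u'" using IH(1) nu by simp
    then obtain u1 u2 where "u' = u1 @ u2" "IL q u1" "IL (a # BB (Suc j)) u2"
      using IL_append1[of q "a # BB (Suc j)" u'] by blast
    moreover have "Dw (u2 @ d @ [c])" using L_lemma calculation(3) IH(2) by blast
    ultimately show ?thesis using red IH x by (intro exI[of _ u1] exI[of _ "u2 @ d @ [c]"]) simp
  next
    case False
    have "nf (u @ [x]) = red1 (nf u @ [x])" by (simp only: nf_snoc step_def)
    then have red: "nf (u @ [x]) = nf u @ [x]" using red1_norel[OF False] by simp
    have "IL (nf u @ [x]) (u' @ d @ [x])" using IL_append2[OF IH(1) IL_single2[OF IH(2)]] by simp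
    then show ?thesis using red IH Dw_nil by (intro exI[of _ "u' @ d @ [x]"] exI[of _ "[]"]) simp
  qed
qed


abbreviation T :: "gen \<Rightarrow> nat + gen wp_sym" where "T x \<equiv> Inr (Letter x)"
abbreviation NT :: "nat \<Rightarrow> nat + gen wp_sym" where "NT n \<equiv> Inl n"
abbreviation W :: "gen list \<Rightarrow> (nat + gen wp_sym) list" where "W w \<equiv> map Inr (map Letter w)"

definition Gr :: "(nat \<times> (nat + gen wp_sym) list) set" where
  "Gr = {(0, [NT 5, Inr Hash, NT 3]),
   (0, [NT 5, T a, NT 0, T a, NT 3]), (0, [NT 5, T b, NT 0, T b, NT 3]), (0, [NT 5, T c, NT 0, T c, NT 3]),
   (5, []), (5, [NT 5, NT 5]), (5, [T a, NT 5, T b, NT 2, T b, NT 5, T c]),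
   (2, [NT 5, T b, NT 2, T b, NT 5]), (2, [NT 5, T c, NT 5, T a, NT 5]),
   (3, []), (3, [NT 3, NT 3]), (3, [T c, NT 3, T b, NT 4, T b, NT 3, T a]),
   (4, [NT 3, T b, NT 4, T b, NT 3]), (4, [NT 3, T a, NT 3, T c, NT 3])}"

lemma finite_Gr: "finite Gr" by (simp add: Gr_def)

abbreviation der where "der \<equiv> (cfg_step Gr)\<^sup>*\<^sup>*"

lemma der_ctx: "der x y \<Longrightarrow> der (p @ x @ q) (p @ y @ q)"
proof (induction rule: rtranclp_induct)
  case base then show ?case by simp
next
  case (step y z)
  from step.hyps(2) obtain u A v w where "y = u @ [Inl A] @ v" "z = u @ w @ v" "(A, w) \<in> Gr"
    by (cases rule: cfg_step.cases) auto
  then have "cfg_step Gr ((p @ u) @ [Inl A] @ (v @ q)) ((p @ u) @ w @ (v @ q))" by (intro cfg_step.intros)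
  then have "cfg_step Gr (p @ y @ q) (p @ z @ q)" using \<open>y = _\<close> \<open>z = _\<close> by simp
  with step.IH show ?case by (rule rtranclp.rtrancl_into_rtrancl)
qed

lemma der_app: "der x x' \<Longrightarrow> der y y' \<Longrightarrow> der (x @ y) (x' @ y')"
proof -
  assume "der x x'" "der y y'"
  from der_ctx[OF this(1), of "[]" y] der_ctx[OF this(2), of x' "[]"]
  show ?thesis by simp
qed

lemma der_prod: "(A, w) \<in> Gr \<Longrightarrow> der [Inl A] w"
  using cfg_step.intros[of A w Gr "[]" "[]"] by simp

lemma der_seq: "list_all2 (\<lambda>X w. der [X] w) Xs ws \<Longrightarrow> der Xs (concat ws)"
proof (induction rule: list_all2_induct)
  case Nil then show ?case by simp
next
  case (Cons X w Xs ws)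
  from der_app[OF Cons.hyps(1) Cons.IH] show ?case by simp
qed

lemma der_rule: "(A, Xs) \<in> Gr \<Longrightarrow> list_all2 (\<lambda>X w. der [X] w) Xs ws \<Longrightarrow> concat ws = v \<Longrightarrow> der [Inl A] v"
  using der_prod der_seq by (metis rtranclp_trans)

lemma DK_complete:
  shows "Dw d \<Longrightarrow> der [NT 5] (W d) \<and> der [NT 3] (W (rev d))"
    and "Kw k \<Longrightarrow> der [NT 2] (W k) \<and> der [NT 4] (W (rev k))"
proof (induction rule: Dw_Kw.inducts)
  case Dw_nil
  then show ?case using der_prod[of 5 "[]"] der_prod[of 3 "[]"] by (simp add: Gr_def)
next
  case (Dw_app u v)
  have 1: "der [NT 5] (W (u @ v))"
    by (rule der_rule[of 5 "[NT 5, NT 5]" "[W u, W v]"]) (use Dw_app.IH in \<open>simp_all add: Gr_def\<close>)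
  have 2: "der [NT 3] (W (rev (u @ v)))"
    by (rule der_rule[of 3 "[NT 3, NT 3]" "[W (rev v), W (rev u)]"]) (use Dw_app.IH in \<open>simp_all add: Gr_def\<close>)
  show ?case using 1 2 by simp
next
  case (Dw_rel d1 k d2)
  have 1: "der [NT 5] (W (a # d1 @ b # k @ b # d2 @ [c]))"
    by (rule der_rule[of 5 "[T a, NT 5, T b, NT 2, T b, NT 5, T c]" "[[T a], W d1, [T b], W k, [T b], W d2, [T c]]"])
      (use Dw_rel.IH in \<open>simp_all add: Gr_def\<close>)
  have 2: "der [NT 3] (W (rev (a # d1 @ b # k @ b # d2 @ [c])))"
    by (rule der_rule[of 3 "[T c, NT 3, T b, NT 4, T b, NT 3, T a]" "[[T c], W (rev d2), [T b], W (rev k), [T b], W (rev d1), [T a]]"])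
      (use Dw_rel.IH in \<open>simp_all add: Gr_def\<close>)
  show ?case using 1 2 by simp
next
  case (Kw_b d1 k d2)
  have 1: "der [NT 2] (W (d1 @ b # k @ b # d2))"
    by (rule der_rule[of 2 "[NT 5, T b, NT 2, T b, NT 5]" "[W d1, [T b], W k, [T b], W d2]"])
      (use Kw_b.IH in \<open>simp_all add: Gr_def\<close>)
  have 2: "der [NT 4] (W (rev (d1 @ b # k @ b # d2)))"
    by (rule der_rule[of 4 "[NT 3, T b, NT 4, T b, NT 3]" "[W (rev d2), [T b], W (rev k), [T b], W (rev d1)]"])
      (use Kw_b.IH in \<open>simp_all add: Gr_def\<close>)
  show ?case using 1 2 by simp
next
  case (Kw_c d1 d2 d3)
  have 1: "der [NT 2] (W (d1 @ c # d2 @ a # d3))"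
    by (rule der_rule[of 2 "[NT 5, T c, NT 5, T a, NT 5]" "[W d1, [T c], W d2, [T a], W d3]"])
      (use Kw_c.IH in \<open>simp_all add: Gr_def\<close>)
  have 2: "der [NT 4] (W (rev (d1 @ c # d2 @ a # d3)))"
    by (rule der_rule[of 4 "[NT 3, T a, NT 3, T c, NT 3]" "[W (rev d3), [T a], W (rev d2), [T c], W (rev d1)]"])
      (use Kw_c.IH in \<open>simp_all add: Gr_def\<close>)
  show ?case using 1 2 by simp
qed

lemma Gr_S: "(0, [NT 5, T x, NT 0, T x, NT 3]) \<in> Gr"
  by (cases x) (simp_all add: Gr_def)

lemma S_complete: "IL z u \<Longrightarrow> IL z v \<Longrightarrow> Dw d \<Longrightarrow> Dw e \<Longrightarrow>
  der [NT 0] (W (u @ d) @ [Inr Hash] @ W (rev (v @ e)))"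
proof (induction z arbitrary: u v)
  case Nil
  then have "u = []" "v = []" by (auto elim: IL.cases)
  then show ?case
    by (intro der_rule[of 0 "[NT 5, Inr Hash, NT 3]" "[W d, [Inr Hash], W (rev e)]"])
      (use Nil.prems DK_complete(1) in \<open>simp_all add: Gr_def\<close>)
next
  case (Cons x z)
  from Cons.prems(1) obtain d1 u' where u: "Dw d1" "IL z u'" "u = d1 @ x # u'" by (cases rule: IL.cases) auto
  from Cons.prems(2) obtain e1 v' where v: "Dw e1" "IL z v'" "v = e1 @ x # v'" by (cases rule: IL.cases) auto
  have IH: "der [NT 0] (W (u' @ d) @ [Inr Hash] @ W (rev (v' @ e)))" using Cons.IH u(2) v(2) Cons.prems(3,4) by blast
  show ?case
    by (rule der_rule[OF Gr_S[of x], of "[W d1, [T x], W (u' @ d) @ [Inr Hash] @ W (rev (v' @ e)), [T x], W (rev e1)]"])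
      (use IH u v DK_complete(1) in \<open>simp_all\<close>)
qed


fun sem :: "(nat \<Rightarrow> 't list set) \<Rightarrow> (nat + 't) list \<Rightarrow> 't list set" where
  "sem L [] = {[]}"
| "sem L (Inr t # al) = (Cons t) ` sem L al"
| "sem L (Inl A # al) = {u @ w | u w. u \<in> L A \<and> w \<in> sem L al}"

lemma sem_append: "sem L (x @ y) = {u @ w | u w. u \<in> sem L x \<and> w \<in> sem L y}"
proof (induction x)
  case Nil then show ?case by simp
next
  case (Cons s x)
  show ?case
  proof (cases s)
    case (Inl A)
    then show ?thesis using Cons.IH by auto (metis append.assoc)+
  next
    case (Inr t)
    have "sem L ((s # x) @ y) = Cons t ` sem L (x @ y)" using Inr by simp
    also have "\<dots> = {u @ w | u w. u \<in> sem L (s # x) \<and> w \<in> sem L y}"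
      using Cons.IH Inr by (auto simp: image_def; metis append_Cons)
    finally show ?thesis .
  qed
qed

lemma sem_single_Inl: "sem L [Inl A] = L A" by auto

lemma sem_step: "(\<forall>(A, w)\<in>Gr. sem L w \<subseteq> L A) \<Longrightarrow> cfg_step Gr x y \<Longrightarrow> sem L y \<subseteq> sem L x"
proof -
  assume H: "\<forall>(A, w)\<in>Gr. sem L w \<subseteq> L A" and st: "cfg_step Gr x y"
  from st obtain u A v w where "x = u @ [Inl A] @ v" "y = u @ w @ v" "(A, w) \<in> Gr"
    by (cases rule: cfg_step.cases) auto
  moreover then have "sem L w \<subseteq> sem L [Inl A]" using H sem_single_Inl by auto
  ultimately show ?thesis by (auto simp only: sem_append) blast
qed

lemma sem_der: "(\<forall>(A, w)\<in>Gr. sem L w \<subseteq> L A) \<Longrightarrow> der x y \<Longrightarrow> sem L y \<subseteq> sem L x"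
proof -
  assume H: "\<forall>(A, w)\<in>Gr. sem L w \<subseteq> L A"
  show "der x y \<Longrightarrow> sem L y \<subseteq> sem L x"
  proof (induction rule: rtranclp_induct)
    case base then show ?case by simp
  next
    case (step y z) then show ?case using sem_step[OF H] by blast
  qed
qed

lemma sem_term: "sem L (map Inr w) = {w}"
  by (induction w) auto

definition Lg :: "nat \<Rightarrow> gen wp_sym list set" where
  "Lg n = (if n = 0 then word_problem Pi2_rels
     else if n = 5 then {map Letter d | d. nf d = []}
     else if n = 2 then {map Letter k | k j. nf k = nf (BB j)}
     else if n = 3 then {map Letter (rev d) | d. nf d = []}
     else if n = 4 then {map Letter (rev k) | k j. nf k = nf (BB j)} else {})"

lemma Lg_simps: "Lg 0 = word_problem Pi2_rels" "Lg 5 = {map Letter d | d. nf d = []}"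
  "Lg 2 = {map Letter k | k j. nf k = nf (BB j)}" "Lg 3 = {map Letter (rev d) | d. nf d = []}"
  "Lg 4 = {map Letter (rev k) | k j. nf k = nf (BB j)}"
  by (simp_all add: Lg_def)

lemma nf_sub: "nf u = nf u' \<Longrightarrow> nf (p @ u @ q) = nf (p @ u' @ q)" by (rule nf_cong)

lemma nfD_rel: "nf d1 = [] \<Longrightarrow> nf k = nf (BB j) \<Longrightarrow> nf d2 = [] \<Longrightarrow> nf (a # d1 @ b # k @ b # d2 @ [c]) = []"
proof -
  assume A: "nf d1 = []" "nf k = nf (BB j)" "nf d2 = []"
  have "nf ([a] @ d1 @ (b # k @ b # d2 @ [c])) = nf ([a] @ [] @ (b # k @ b # d2 @ [c]))"
    by (rule nf_sub) (simp add: A nf_nil)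
  also have "\<dots> = nf ((a # [b]) @ k @ (b # d2 @ [c]))" by simp
  also have "\<dots> = nf ((a # [b]) @ BB j @ (b # d2 @ [c]))" by (rule nf_sub) (simp add: A)
  also have "\<dots> = nf ((a # b # BB j @ [b]) @ d2 @ [c])" by simp
  also have "\<dots> = nf ((a # b # BB j @ [b]) @ [] @ [c])" by (rule nf_sub) (simp add: A nf_nil)
  also have "\<dots> = nf ([] @ rel (Suc j) @ [])" by (simp add: rel_def h_def replicate_app_Cons_same)
  also have "\<dots> = []" using nf_rel[of "Suc j" "[]" "[]"] nf_nil by simp
  finally show ?thesis by simp
qed

lemma nfK_b: "nf d1 = [] \<Longrightarrow> nf k = nf (BB j) \<Longrightarrow> nf d2 = [] \<Longrightarrow> nf (d1 @ b # k @ b # d2) = nf (BB (Suc j))"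
proof -
  assume A: "nf d1 = []" "nf k = nf (BB j)" "nf d2 = []"
  have "nf ([] @ d1 @ (b # k @ b # d2)) = nf ([] @ [] @ (b # k @ b # d2))"
    by (rule nf_sub) (simp add: A nf_nil)
  also have "\<dots> = nf ([b] @ k @ (b # d2))" by simp
  also have "\<dots> = nf ([b] @ BB j @ (b # d2))" by (rule nf_sub) (simp add: A)
  also have "\<dots> = nf ((b # BB j @ [b]) @ d2 @ [])" by simp
  also have "\<dots> = nf ((b # BB j @ [b]) @ [] @ [])" by (rule nf_sub) (simp add: A nf_nil)
  also have "\<dots> = nf (BB (Suc j))" by (simp add: replicate_app_Cons_same)
  finally show ?thesis by simp
qed

lemma nfK_c: "nf d1 = [] \<Longrightarrow> nf d2 = [] \<Longrightarrow> nf d3 = [] \<Longrightarrow> nf (d1 @ c # d2 @ a # d3) = nf (BB 0)"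
proof -
  assume A: "nf d1 = []" "nf d2 = []" "nf d3 = []"
  have "nf ([] @ d1 @ (c # d2 @ a # d3)) = nf ([] @ [] @ (c # d2 @ a # d3))"
    by (rule nf_sub) (simp add: A nf_nil)
  also have "\<dots> = nf ([c] @ d2 @ (a # d3))" by simp
  also have "\<dots> = nf ([c] @ [] @ (a # d3))" by (rule nf_sub) (simp add: A nf_nil)
  also have "\<dots> = nf ([c, a] @ d3 @ [])" by simp
  also have "\<dots> = nf ([c, a] @ [] @ [])" by (rule nf_sub) (simp add: A nf_nil)
  finally show ?thesis by simp
qed

lemma nfD_app: "nf u = [] \<Longrightarrow> nf v = [] \<Longrightarrow> nf (u @ v) = []"
  using nf_sub[of u "[]" "[]" v] nf_sub[of v "[]" "[]" "[]"] nf_nil by simp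

lemma LD_nil: "[] \<in> Lg 5" by (auto simp: Lg_simps nf_nil)
lemma LD_app: "x \<in> Lg 5 \<Longrightarrow> y \<in> Lg 5 \<Longrightarrow> x @ y \<in> Lg 5"
  by (auto simp: Lg_simps) (metis map_append nfD_app)
lemma LD_rel: "x \<in> Lg 5 \<Longrightarrow> y \<in> Lg 2 \<Longrightarrow> z \<in> Lg 5 \<Longrightarrow> Letter a # x @ Letter b # y @ Letter b # z @ [Letter c] \<in> Lg 5"
proof -
  assume "x \<in> Lg 5" "y \<in> Lg 2" "z \<in> Lg 5"
  then obtain d1 k j d2 where "x = map Letter d1" "nf d1 = []" "y = map Letter k" "nf k = nf (BB j)"
    "z = map Letter d2" "nf d2 = []" by (auto simp: Lg_simps)
  then show ?thesis using nfD_rel[of d1 k j d2] unfolding Lg_simps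
    by (intro CollectI exI[of _ "a # d1 @ b # k @ b # d2 @ [c]"]) simp
qed
lemma LK_b: "x \<in> Lg 5 \<Longrightarrow> y \<in> Lg 2 \<Longrightarrow> z \<in> Lg 5 \<Longrightarrow> x @ Letter b # y @ Letter b # z \<in> Lg 2"
proof -
  assume "x \<in> Lg 5" "y \<in> Lg 2" "z \<in> Lg 5"
  then obtain d1 k j d2 where "x = map Letter d1" "nf d1 = []" "y = map Letter k" "nf k = nf (BB j)"
    "z = map Letter d2" "nf d2 = []" by (auto simp: Lg_simps)
  then show ?thesis using nfK_b[of d1 k j d2] unfolding Lg_simps
    by (intro CollectI exI[of _ "d1 @ b # k @ b # d2"] exI[of _ "Suc j"]) simp
qed
lemma LK_c: "x \<in> Lg 5 \<Longrightarrow> y \<in> Lg 5 \<Longrightarrow> z \<in> Lg 5 \<Longrightarrow> x @ Letter c # y @ Letter a # z \<in> Lg 2"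
proof -
  assume "x \<in> Lg 5" "y \<in> Lg 5" "z \<in> Lg 5"
  then obtain d1 d2 d3 where "x = map Letter d1" "nf d1 = []" "y = map Letter d2" "nf d2 = []"
    "z = map Letter d3" "nf d3 = []" by (auto simp: Lg_simps)
  then show ?thesis using nfK_c[of d1 d2 d3] unfolding Lg_simps
    by (intro CollectI exI[of _ "d1 @ c # d2 @ a # d3"] exI[of _ "0"]) simp
qed
lemma LDR_nil: "[] \<in> Lg 3" by (auto simp: Lg_simps nf_nil)
lemma LDR_app: "x \<in> Lg 3 \<Longrightarrow> y \<in> Lg 3 \<Longrightarrow> x @ y \<in> Lg 3"
proof -
  assume "x \<in> Lg 3" "y \<in> Lg 3"
  then obtain d1 d2 where "x = map Letter (rev d1)" "nf d1 = []" "y = map Letter (rev d2)" "nf d2 = []"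
    by (auto simp: Lg_simps)
  then show ?thesis using nfD_app[of d2 d1] unfolding Lg_simps
    by (intro CollectI exI[of _ "d2 @ d1"]) simp
qed
lemma LDR_rel: "x \<in> Lg 3 \<Longrightarrow> y \<in> Lg 4 \<Longrightarrow> z \<in> Lg 3 \<Longrightarrow> Letter c # x @ Letter b # y @ Letter b # z @ [Letter a] \<in> Lg 3"
proof -
  assume "x \<in> Lg 3" "y \<in> Lg 4" "z \<in> Lg 3"
  then obtain d1 k j d2 where "x = map Letter (rev d2)" "nf d2 = []" "y = map Letter (rev k)" "nf k = nf (BB j)"
    "z = map Letter (rev d1)" "nf d1 = []" by (auto simp: Lg_simps)
  then show ?thesis using nfD_rel[of d1 k j d2] unfolding Lg_simps
    by (intro CollectI exI[of _ "a # d1 @ b # k @ b # d2 @ [c]"]) simp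
qed
lemma LKR_b: "x \<in> Lg 3 \<Longrightarrow> y \<in> Lg 4 \<Longrightarrow> z \<in> Lg 3 \<Longrightarrow> x @ Letter b # y @ Letter b # z \<in> Lg 4"
proof -
  assume "x \<in> Lg 3" "y \<in> Lg 4" "z \<in> Lg 3"
  then obtain d1 k j d2 where "x = map Letter (rev d2)" "nf d2 = []" "y = map Letter (rev k)" "nf k = nf (BB j)"
    "z = map Letter (rev d1)" "nf d1 = []" by (auto simp: Lg_simps)
  then show ?thesis using nfK_b[of d1 k j d2] unfolding Lg_simps
    by (intro CollectI exI[of _ "d1 @ b # k @ b # d2"] exI[of _ "Suc j"]) simp
qed
lemma LKR_c: "x \<in> Lg 3 \<Longrightarrow> y \<in> Lg 3 \<Longrightarrow> z \<in> Lg 3 \<Longrightarrow> x @ Letter a # y @ Letter c # z \<in> Lg 4"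
proof -
  assume "x \<in> Lg 3" "y \<in> Lg 3" "z \<in> Lg 3"
  then obtain d1 d2 d3 where "x = map Letter (rev d3)" "nf d3 = []" "y = map Letter (rev d2)" "nf d2 = []"
    "z = map Letter (rev d1)" "nf d1 = []" by (auto simp: Lg_simps)
  then show ?thesis using nfK_c[of d1 d2 d3] unfolding Lg_simps
    by (intro CollectI exI[of _ "d1 @ c # d2 @ a # d3"] exI[of _ "0"]) simp
qed
lemma LS_base: "x \<in> Lg 5 \<Longrightarrow> z \<in> Lg 3 \<Longrightarrow> x @ Hash # z \<in> Lg 0"
proof -
  assume "x \<in> Lg 5" "z \<in> Lg 3"
  then obtain d1 d2 where "x = map Letter d1" "nf d1 = []" "z = map Letter (rev d2)" "nf d2 = []"
    by (auto simp: Lg_simps)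
  moreover then have "peq d1 d2" using peq_iff_nf by simp
  ultimately show ?thesis unfolding Lg_simps word_problem_def by auto
qed
lemma LS_step: "x \<in> Lg 5 \<Longrightarrow> y \<in> Lg 0 \<Longrightarrow> z \<in> Lg 3 \<Longrightarrow> x @ Letter g # y @ Letter g # z \<in> Lg 0"
proof -
  assume "x \<in> Lg 5" "y \<in> Lg 0" "z \<in> Lg 3"
  then obtain d1 u v d2 where A: "x = map Letter d1" "nf d1 = []" "y = map Letter u @ [Hash] @ map Letter (rev v)"
    "peq u v" "z = map Letter (rev d2)" "nf d2 = []"
    by (auto simp: Lg_simps word_problem_def)
  have "nf ([] @ d1 @ (g # u)) = nf ([] @ [] @ (g # u))" by (rule nf_sub) (simp add: A nf_nil)
  also have "\<dots> = nf ([g] @ u @ [])" by simp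
  also have "\<dots> = nf ([g] @ v @ [])" by (rule nf_sub) (use A(4) peq_iff_nf in simp)
  also have "\<dots> = nf ([] @ [] @ (g # v))" by simp
  also have "\<dots> = nf ([] @ d2 @ (g # v))" by (rule nf_sub) (simp add: A nf_nil)
  finally have "peq (d1 @ g # u) (d2 @ g # v)" using peq_iff_nf by simp
  moreover have "x @ Letter g # y @ Letter g # z = map Letter (d1 @ g # u) @ [Hash] @ map Letter (rev (d2 @ g # v))"
    using A by simp
  ultimately show ?thesis unfolding Lg_simps word_problem_def by blast
qed

lemma s0: "sem Lg [NT 5, Inr Hash, NT 3] \<subseteq> Lg 0"
  by (auto intro!: LS_base)
lemma s1: "sem Lg [NT 5, T x, NT 0, T x, NT 3] \<subseteq> Lg 0"
  by (auto intro!: LS_step)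
lemma s2: "sem Lg [] \<subseteq> Lg 5"
  by (auto intro!: LD_nil)
lemma s3: "sem Lg [NT 5, NT 5] \<subseteq> Lg 5"
  by (auto intro!: LD_app)
lemma s4: "sem Lg [T a, NT 5, T b, NT 2, T b, NT 5, T c] \<subseteq> Lg 5"
  by (auto intro!: LD_rel)
lemma s5: "sem Lg [NT 5, T b, NT 2, T b, NT 5] \<subseteq> Lg 2"
  by (auto intro!: LK_b)
lemma s6: "sem Lg [NT 5, T c, NT 5, T a, NT 5] \<subseteq> Lg 2"
  by (auto intro!: LK_c)
lemma s7: "sem Lg [] \<subseteq> Lg 3"
  by (auto intro!: LDR_nil)
lemma s8: "sem Lg [NT 3, NT 3] \<subseteq> Lg 3"
  by (auto intro!: LDR_app)
lemma s9: "sem Lg [T c, NT 3, T b, NT 4, T b, NT 3, T a] \<subseteq> Lg 3"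
  by (auto intro!: LDR_rel)
lemma s10: "sem Lg [NT 3, T b, NT 4, T b, NT 3] \<subseteq> Lg 4"
  by (auto intro!: LKR_b)
lemma s11: "sem Lg [NT 3, T a, NT 3, T c, NT 3] \<subseteq> Lg 4"
  by (auto intro!: LKR_c)
lemma Gr_sound': "(A, w) \<in> Gr \<Longrightarrow> sem Lg w \<subseteq> Lg A"
  unfolding Gr_def
    by (elim insertE emptyE) (auto simp del: sem.simps simp: s0 s1 s2 s3 s4 s5 s6 s7 s8 s9 s10 s11)

lemma Gr_sound: "\<forall>(A, w)\<in>Gr. sem Lg w \<subseteq> Lg A"
  using Gr_sound' by blast

lemma part1: "context_free (word_problem Pi2_rels)"
proof -
  have "word_problem Pi2_rels = cfg_lang Gr 0"
  proof (rule Set.set_eqI, rule iffI)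
    fix w assume "w \<in> word_problem Pi2_rels"
    then obtain u v where w: "w = map Letter u @ [Hash] @ map Letter (rev v)" "peq u v"
      by (auto simp: word_problem_def)
    then have nfe: "nf u = nf v" using peq_iff_nf by simp
    obtain u' d where "IL (nf u) u'" "Dw d" "u = u' @ d" using B_lemma by blast
    moreover obtain v' e where "IL (nf v) v'" "Dw e" "v = v' @ e" using B_lemma by blast
    ultimately have "der [NT 0] (W (u' @ d) @ [Inr Hash] @ W (rev (v' @ e)))"
      using S_complete nfe by metis
    then show "w \<in> cfg_lang Gr 0" using w \<open>u = u' @ d\<close> \<open>v = v' @ e\<close> by (simp add: cfg_lang_def)
  next
    fix w assume "w \<in> cfg_lang Gr 0"
    then have "der [Inl 0] (map Inr w)" by (simp add: cfg_lang_def)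
    from sem_der[OF Gr_sound this] have "sem Lg (map Inr w) \<subseteq> sem Lg [Inl 0]" .
    then show "w \<in> word_problem Pi2_rels" using sem_term sem_single_Inl Lg_simps(1) by auto
  qed
  then show ?thesis unfolding context_free_def using finite_Gr by blast
qed


theorem mainTheorem11:
  shows "context_free (word_problem Pi2_rels) \<and>
         (\<forall>e. idempotent_of Pi2 e \<longrightarrow> \<not> finitely_generated_group (maximal_subgroup Pi2 e))"
  using part1 part2 by blast

end
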